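(* Let $X\ni x$ be a smooth surface germ and let $g:X_n\to X_{n-1}\to\cdots\to X_1\to X_0:=X$ be a sequence of blow-ups with the data $(f_i,F_i,x_i\in X_i)$ whose dual graph $\mathcal{DG}$ (the dual graph of the composite morphism $X_n\to X$) is a chain. Let $n_3$ be the largest integer with $n_3\le n$ such that $x_i\in F_i\setminus F_{i-1}$ for all $1\le i\le n_3-1$, where $F_0:=\emptyset$. Index the vertices of $\mathcal{DG}$ as $\{E_j\}_{-n_1\le j\le n_2}$ so that $E_0:=F_n$ (the only $g$-exceptional $(-1)$-curve on $X_n$), $E_{n_2}:=F_1$, and $E_j$ is adjacent to $E_{j+1}$ for $-n_1\le j\le n_2-1$. Let $w_j:=-E_j\cdot E_j$, $W_1:=\sum_{j<0}w_j$ and $W_2:=\sum_{j>0}w_j$. Then $$(W_1-n_1)+n_3-1=W_2-n_2.$$ In particular, $n=n_1+n_2+1\le n_3+\min\{W_1,W_2\}$.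
   Context: Work over an algebraically closed field. A sequence of blow-ups $X_n\to\cdots\to X_0:=X$ with the data $(f_i,F_i,x_i\in X_i)$ means: for $1\le i\le n$, $f_i:X_i\to X_{i-1}$ is the blow-up at a closed point $x_{i-1}\in X_{i-1}$ with exceptional curve $F_i$, where $x_0:=x$, and $x_i\in F_i$ for $1\le i\le n-1$; strict transforms of $F_i$ on later $X_j$ are again denoted $F_i$. The dual graph has the $n$ exceptional curves $F_1,\dots,F_n$ on $X_n$ as vertices, weights $-F_i\cdot F_i$, and edges given by intersection numbers; a chain is a path (tree without vertices of degree $\ge3$). In this situation $F_1$ is an end vertex of the chain. *)

theory Defs
  imports Main
begin

text \<open>Combinatorial model of a sequence of point blow-ups X_n -> ... -> X_0 = X of a
smooth surface germ.  Exceptional curves F_1..F_n are numbered 1..n.  The blown-up point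
x_k (k >= 1) lies on F_k; since the exceptional locus is a simple normal crossing tree,
x_k lies on at most one further exceptional curve.  The function s records this:
s k = 0 means x_k lies on no F_j with j ~= k (a free point), s k = j >= 1 means x_k is the
point F_k meet F_j.  The point x_0 = x lies on no exceptional curve.\<close>

definition on_pt :: "(nat \<Rightarrow> nat) \<Rightarrow> nat \<Rightarrow> nat \<Rightarrow> bool" where
  "on_pt s k a \<longleftrightarrow> 1 \<le> k \<and> 1 \<le> a \<and> a \<le> k \<and> (a = k \<or> a = s k)"

text \<open>intm s k a b = intersection number F_a . F_b on X_k (curves a,b in 1..k; 0 otherwise).\<close>
fun intm :: "(nat \<Rightarrow> nat) \<Rightarrow> nat \<Rightarrow> nat \<Rightarrow> nat \<Rightarrow> int" where
  "intm s 0 a b = 0"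
| "intm s (Suc k) a b =
     (if a \<le> k \<and> b \<le> k then
        intm s k a b - (if on_pt s k a \<and> on_pt s k b then 1 else 0)
      else if a = Suc k \<and> b = Suc k then -1
      else if a = Suc k \<and> 1 \<le> b \<and> b \<le> k then (if on_pt s k b then 1 else 0)
      else if b = Suc k \<and> 1 \<le> a \<and> a \<le> k then (if on_pt s k a then 1 else 0)
      else 0)"

definition valid_blowups :: "(nat \<Rightarrow> nat) \<Rightarrow> nat \<Rightarrow> bool" where
  "valid_blowups s n \<longleftrightarrow>
     (\<forall>k. 1 \<le> k \<and> k \<le> n - 1 \<longrightarrow>
        s k = 0 \<or> (1 \<le> s k \<and> s k < k \<and> intm s k (s k) k = 1))"

definition dg_adj :: "(nat \<Rightarrow> nat) \<Rightarrow> nat \<Rightarrow> nat \<Rightarrow> nat \<Rightarrow> bool" where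
  "dg_adj s n a b \<longleftrightarrow> a \<noteq> b \<and> intm s n a b \<noteq> 0"

definition dg_weight :: "(nat \<Rightarrow> nat) \<Rightarrow> nat \<Rightarrow> nat \<Rightarrow> int" where
  "dg_weight s n a = - intm s n a a"

definition dg_chain :: "(nat \<Rightarrow> nat) \<Rightarrow> nat \<Rightarrow> bool" where
  "dg_chain s n \<longleftrightarrow> (\<exists>vs. distinct vs \<and> set vs = {1..n} \<and>
     (\<forall>a\<in>{1..n}. \<forall>b\<in>{1..n}. dg_adj s n a b \<longleftrightarrow>
        (\<exists>i. Suc i < length vs \<and> {vs ! i, vs ! Suc i} = {a, b})))"

text \<open>x_i in F_i \ F_{i-1} (F_0 = empty): x_i is not on F_{i-1}.\<close>
definition n3 :: "(nat \<Rightarrow> nat) \<Rightarrow> nat \<Rightarrow> nat" where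
  "n3 s n = (GREATEST m. m \<le> n \<and>
     (\<forall>i. 1 \<le> i \<and> i \<le> m - 1 \<longrightarrow> \<not> (i \<ge> 2 \<and> s i = i - 1)))"

end

theory Submission
  imports Defs
begin

lemma intm_sym: "intm s k a b = intm s k b a"
  by (induction k) (auto simp: on_pt_def)

lemma intm_Suc_old: "a \<le> m \<Longrightarrow> b \<le> m \<Longrightarrow>
  intm s (Suc m) a b = intm s m a b - (if on_pt s m a \<and> on_pt s m b then 1 else 0)"
  by simp

lemma intm_Suc_new: "1 \<le> b \<Longrightarrow> b \<le> m \<Longrightarrow>
  intm s (Suc m) (Suc m) b = (if on_pt s m b then 1 else 0)"
  by simp

lemma intm_diag_new: "1 \<le> m \<Longrightarrow> intm s m m m = -1"
  by (cases m) auto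

lemma intm_diag_bound: "1 \<le> a \<Longrightarrow> a \<le> k \<Longrightarrow> intm s k a a \<le> -1 \<and> (a < k \<longrightarrow> intm s k a a \<le> -2)"
proof (induction k)
  case 0 then show ?case by simp
next
  case (Suc k)
  show ?case
  proof (cases "a = Suc k")
    case True then show ?thesis by simp
  next
    case False
    then have "a \<le> k" using Suc by simp
    then have h: "intm s k a a \<le> -1" using Suc by simp
    show ?thesis
    proof (cases "a = k")
      case True
      then have "on_pt s k a" using Suc by (simp add: on_pt_def)
      then show ?thesis using h \<open>a \<le> k\<close> by simp
    next
      case False
      then have "intm s k a a \<le> -2" using Suc \<open>a \<le> k\<close> by simp
      then show ?thesis using \<open>a \<le> k\<close> by simp
    qed
  qed
qed

lemma valid_mono: "valid_blowups s (Suc m) \<Longrightarrow> valid_blowups s m"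
  unfolding valid_blowups_def by auto

lemma valid_last: "valid_blowups s (Suc m) \<Longrightarrow> 1 \<le> m \<Longrightarrow>
   s m = 0 \<or> (1 \<le> s m \<and> s m < m \<and> intm s m (s m) m = 1)"
  unfolding valid_blowups_def by auto

lemma all_free: "valid_blowups s n \<Longrightarrow> k \<le> n - 1 \<Longrightarrow>
   (\<forall>i. 2 \<le> i \<and> i \<le> k \<longrightarrow> s i \<noteq> i - 1) \<Longrightarrow> (\<forall>i. 1 \<le> i \<and> i \<le> k \<longrightarrow> s i = 0)"
proof (induction k)
  case 0 then show ?case by simp
next
  case (Suc k)
  have IH: "\<forall>i. 1 \<le> i \<and> i \<le> k \<longrightarrow> s i = 0" using Suc by auto
  have v: "s (Suc k) = 0 \<or> (1 \<le> s (Suc k) \<and> s (Suc k) < Suc k \<and> intm s (Suc k) (s (Suc k)) (Suc k) = 1)"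
    using Suc.prems(1,2) unfolding valid_blowups_def by auto
  have "s (Suc k) = 0"
  proof (rule ccontr)
    assume a: "s (Suc k) \<noteq> 0"
    with v have b: "1 \<le> s (Suc k)" "s (Suc k) \<le> k" "intm s (Suc k) (s (Suc k)) (Suc k) = 1" by (auto simp del: intm.simps)
    then have "intm s (Suc k) (Suc k) (s (Suc k)) = 1" by (simp add: intm_sym)
    then have "on_pt s k (s (Suc k))" using b by (cases "on_pt s k (s (Suc k))") auto
    then have "s (Suc k) = k \<or> s (Suc k) = s k" "1 \<le> k" unfolding on_pt_def by auto
    moreover have "s k = 0" using IH \<open>1 \<le> k\<close> by auto
    ultimately have "s (Suc k) = k" using b by auto
    moreover have "s (Suc k) \<noteq> Suc k - 1" using spec[OF Suc.prems(3), of "Suc k"] \<open>1 \<le> k\<close> by simp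
    ultimately show False by simp
  qed
  then show ?case using IH by (auto simp: le_Suc_eq)
qed

definition Qp :: "(nat \<Rightarrow> nat) \<Rightarrow> nat \<Rightarrow> bool" where
  "Qp s m \<longleftrightarrow> (\<forall>i. 1 \<le> i \<and> i \<le> m - 1 \<longrightarrow> \<not> (i \<ge> 2 \<and> s i = i - 1))"

lemma n3_alt: "n3 s n = (GREATEST m. m \<le> n \<and> Qp s m)"
  unfolding n3_def Qp_def by simp

lemma n3_props: "n3 s k \<le> k \<and> Qp s (n3 s k) \<and> (\<forall>m. m \<le> k \<and> Qp s m \<longrightarrow> m \<le> n3 s k)"
proof -
  have ex: "0 \<le> k \<and> Qp s 0" by (simp add: Qp_def)
  have bd: "\<forall>y. y \<le> k \<and> Qp s y \<longrightarrow> y \<le> k" by simp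
  show ?thesis unfolding n3_alt
    using GreatestI_nat[of "\<lambda>m. m \<le> k \<and> Qp s m" 0 k, OF ex] Greatest_le_nat[of "\<lambda>m. m \<le> k \<and> Qp s m" _ k]
    by auto
qed

lemma Qp1: "Qp s 1" by (simp add: Qp_def)

lemma n3_ge1: "1 \<le> k \<Longrightarrow> 1 \<le> n3 s k"
  using n3_props[of s k] Qp1[of s] by auto

lemma n3_one: "n3 s 1 = 1"
  using n3_props[of s 1] Qp1[of s] by auto

lemma n3_full: "Qp s k \<Longrightarrow> n3 s k = k"
  using n3_props[of s k] by (meson le_antisym order_refl)

lemma n3_Suc_eq: "valid_blowups s (Suc m) \<Longrightarrow> 1 \<le> m \<Longrightarrow> s m \<noteq> 0 \<Longrightarrow> n3 s (Suc m) = n3 s m"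
proof -
  assume v: "valid_blowups s (Suc m)" and m: "1 \<le> m" and sm: "s m \<noteq> 0"
  have nQ: "\<not> Qp s (Suc m)"
  proof
    assume "Qp s (Suc m)"
    then have "\<forall>i. 2 \<le> i \<and> i \<le> m \<longrightarrow> s i \<noteq> i - 1" unfolding Qp_def by auto
    from all_free[OF v _ this] have "s m = 0" using m by auto
    with sm show False by simp
  qed
  have p1: "n3 s (Suc m) \<le> Suc m" "Qp s (n3 s (Suc m))" using n3_props[of s "Suc m"] by auto
  then have "n3 s (Suc m) \<noteq> Suc m" using nQ by auto
  with p1 have "n3 s (Suc m) \<le> m" by simp
  then have a: "n3 s (Suc m) \<le> n3 s m" using n3_props[of s m] p1 by auto
  have "n3 s m \<le> Suc m" "Qp s (n3 s m)" using n3_props[of s m] by auto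
  then have "n3 s m \<le> n3 s (Suc m)" using n3_props[of s "Suc m"] by auto
  with a show ?thesis by simp
qed

lemma n3_Suc_full: "s m = 0 \<Longrightarrow> n3 s m = m \<Longrightarrow> n3 s (Suc m) = Suc m"
proof -
  assume a: "s m = 0" "n3 s m = m"
  then have "Qp s m" using n3_props[of s m] by simp
  have "Qp s (Suc m)" unfolding Qp_def
  proof (intro allI impI)
    fix i assume i: "1 \<le> i \<and> i \<le> Suc m - 1"
    show "\<not> (i \<ge> 2 \<and> s i = i - 1)"
    proof (cases "i = m")
      case True then show ?thesis using a by auto
    next
      case False then have "i \<le> m - 1" using i by auto
      then show ?thesis using \<open>Qp s m\<close> i unfolding Qp_def by blast
    qed
  qed
  then show ?thesis by (rule n3_full)
qed

lemma adj_step: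
  assumes v: "valid_blowups s (Suc m)" and m: "1 \<le> m"
    and a: "a \<in> {1..m}" and b: "b \<in> {1..m}"
  shows "dg_adj s m a b \<longleftrightarrow> dg_adj s (Suc m) a b \<or> (a \<noteq> b \<and> on_pt s m a \<and> on_pt s m b)"
proof (cases "a \<noteq> b \<and> on_pt s m a \<and> on_pt s m b")
  case True
  then have "(a = m \<and> b = s m) \<or> (a = s m \<and> b = m)" "s m \<noteq> 0" unfolding on_pt_def by auto
  moreover have "intm s m (s m) m = 1" using valid_last[OF v m] \<open>s m \<noteq> 0\<close> by auto
  ultimately have "intm s m a b = 1" using intm_sym by metis
  then show ?thesis using True unfolding dg_adj_def by simp
next
  case False
  then have "intm s (Suc m) a b = intm s m a b \<or> a = b" using a b by auto
  then show ?thesis using False unfolding dg_adj_def by auto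
qed


lemma sum_shift_int: "(\<Sum>j\<in>{a..b::int}. f (j + c)) = (\<Sum>k\<in>{a+c..b+c}. f k)"
  by (rule sum.reindex_bij_witness[of _ "\<lambda>k. k - c" "\<lambda>j. j + c"]) auto

lemma main:
  assumes "valid_blowups s n" "n \<ge> 1" "bij_betw E {- int n1 .. int n2} {1..n}"
    "\<forall>i\<in>{- int n1 .. int n2}. \<forall>j\<in>{- int n1 .. int n2}.
           dg_adj s n (E i) (E j) \<longleftrightarrow> \<bar>i - j\<bar> = 1"
    "E 0 = n" "E (int n2) = 1"
  shows "(\<Sum>j\<in>{- int n1 .. -1}. dg_weight s n (E j)) - int n1 + int (n3 s n) - 1
           = (\<Sum>j\<in>{1 .. int n2}. dg_weight s n (E j)) - int n2 \<and> (n1 = 0 \<longrightarrow> n3 s n = n)"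
  using assms
proof (induction n arbitrary: n1 n2 E)
  case 0 then show ?case by simp
next
  case (Suc m)
  define D where "D = {- int n1 .. int n2}"
  have bij: "bij_betw E D {1..Suc m}" using Suc.prems(3) D_def by simp
  have card: "Suc m = n1 + n2 + 1"
    using bij_betw_same_card[OF bij] D_def by simp
  show ?case
  proof (cases "m = 0")
    case True
    then have "n1 = 0" "n2 = 0" using card by auto
    then show ?thesis using True n3_one[of s] by simp
  next
    case False
    then have m1: "1 \<le> m" by simp
    have v: "valid_blowups s (Suc m)" using Suc.prems(1) .
    have vm: "valid_blowups s m" using valid_mono[OF v] .
    have inj: "inj_on E D" and img: "E ` D = {1..Suc m}" using bij by (auto simp: bij_betw_def)
    have D0: "0 \<in> D" by (simp add: D_def)
    have hE: "\<And>k. k \<in> D \<Longrightarrow> k \<noteq> 0 \<Longrightarrow> E k \<in> {1..m}"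
    proof -
      fix k assume k: "k \<in> D" "k \<noteq> 0"
      have "E k \<in> {1..Suc m}" using img k by auto
      moreover have "E k \<noteq> E 0" using inj k D0 by (meson inj_on_eq_iff)
      ultimately show "E k \<in> {1..m}" using Suc.prems(5) by auto
    qed
    have hon: "\<And>k. k \<in> D \<Longrightarrow> k \<noteq> 0 \<Longrightarrow> on_pt s m (E k) \<longleftrightarrow> k = 1 \<or> k = -1"
    proof -
      fix k assume k: "k \<in> D" "k \<noteq> 0"
      have "dg_adj s (Suc m) (E 0) (E k) \<longleftrightarrow> \<bar>0 - k\<bar> = 1"
        using Suc.prems(4) k D0 D_def by blast
      moreover have "E k \<in> {1..m}" using hE k by blast
      ultimately show "on_pt s m (E k) \<longleftrightarrow> k = 1 \<or> k = -1"
        using Suc.prems(5) unfolding dg_adj_def by (auto split: if_splits)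
    qed
    have n2pos: "n2 \<ge> 1"
    proof (rule ccontr)
      assume "\<not> n2 \<ge> 1" then have "n2 = 0" by simp
      then have "E 0 = 1" using Suc.prems(6) by simp
      then show False using Suc.prems(5) m1 by simp
    qed
    have D1: "1 \<in> D" using n2pos D_def by simp
    obtain km where km: "km \<in> D" "E km = m" using img m1
      by (metis atLeastAtMost_iff imageE le_SucI order_refl)
    have "km \<noteq> 0" using km Suc.prems(5) by auto
    moreover have "on_pt s m m" using m1 by (simp add: on_pt_def)
    ultimately have kmpm: "km = 1 \<or> km = -1" using hon km by metis
    have wm: "dg_weight s (Suc m) m = 2" using intm_diag_new[OF m1, of s] m1 by (simp add: dg_weight_def on_pt_def)
    have wstep: "\<And>k. k \<in> D \<Longrightarrow> k \<noteq> 0 \<Longrightarrow>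
        dg_weight s m (E k) = dg_weight s (Suc m) (E k) - (if k = 1 \<or> k = -1 then 1 else 0)"
    proof -
      fix k assume k: "k \<in> D" "k \<noteq> 0"
      have "E k \<le> m" using hE k by auto
      then show "dg_weight s m (E k) = dg_weight s (Suc m) (E k) - (if k = 1 \<or> k = -1 then 1 else 0)"
        using hon[OF k] by (simp add: dg_weight_def)
    qed
    have adjm: "\<And>i j. i \<in> D \<Longrightarrow> i \<noteq> 0 \<Longrightarrow> j \<in> D \<Longrightarrow> j \<noteq> 0 \<Longrightarrow>
       dg_adj s m (E i) (E j) \<longleftrightarrow> \<bar>i - j\<bar> = 1 \<or> (i \<noteq> j \<and> (i = 1 \<or> i = -1) \<and> (j = 1 \<or> j = -1))"
    proof -
      fix i j assume ij: "i \<in> D" "i \<noteq> 0" "j \<in> D" "j \<noteq> 0"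
      have "dg_adj s m (E i) (E j) \<longleftrightarrow> dg_adj s (Suc m) (E i) (E j) \<or> (E i \<noteq> E j \<and> on_pt s m (E i) \<and> on_pt s m (E j))"
        using adj_step[OF v m1 hE[OF ij(1,2)] hE[OF ij(3,4)]] .
      moreover have "dg_adj s (Suc m) (E i) (E j) \<longleftrightarrow> \<bar>i - j\<bar> = 1" using Suc.prems(4) ij D_def by blast
      moreover have "E i \<noteq> E j \<longleftrightarrow> i \<noteq> j" using inj ij by (meson inj_on_eq_iff)
      ultimately show "dg_adj s m (E i) (E j) \<longleftrightarrow> \<bar>i - j\<bar> = 1 \<or> (i \<noteq> j \<and> (i = 1 \<or> i = -1) \<and> (j = 1 \<or> j = -1))"
        using hon[OF ij(1,2)] hon[OF ij(3,4)] by blast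
    qed
    have bijr: "bij_betw E (D - {0}) {1..m}"
    proof -
      have "bij_betw E (D - {0}) ({1..Suc m} - {Suc m})"
        using bij_betw_DiffI[OF bij, of "{0}" "{Suc m}"] D0 Suc.prems(5) by (simp add: bij_betw_def)
      moreover have "{1..Suc m} - {Suc m} = {1..m}" by auto
      ultimately show ?thesis by simp
    qed
    define W1 where "W1 = (\<Sum>j\<in>{- int n1 .. -1}. dg_weight s (Suc m) (E j))"
    define W2 where "W2 = (\<Sum>j\<in>{1 .. int n2}. dg_weight s (Suc m) (E j))"
    from kmpm show ?thesis
    proof
      assume A: "km = 1"
      then have E1: "E 1 = m" using km by simp
      have smiff: "s m \<noteq> 0 \<longleftrightarrow> n1 \<ge> 1"
      proof
        assume sm: "s m \<noteq> 0"
        show "n1 \<ge> 1"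
        proof (rule ccontr)
          assume "\<not> n1 \<ge> 1" then have n10: "n1 = 0" by simp
          have "1 \<le> s m" "s m < m" using valid_last[OF v m1] sm by auto
          then obtain k where k: "k \<in> D" "E k = s m" using img
            by (metis atLeastAtMost_iff imageE le_SucI less_imp_le_nat)
          have "k \<noteq> 0" using k Suc.prems(5) \<open>s m < m\<close> by auto
          moreover have "on_pt s m (s m)" using \<open>1 \<le> s m\<close> \<open>s m < m\<close> by (simp add: on_pt_def)
          ultimately have "k = 1 \<or> k = -1" using hon k by metis
          moreover have "k \<noteq> -1" using k n10 D_def by auto
          ultimately show False using k E1 \<open>s m < m\<close> by auto
        qed
      next
        assume "n1 \<ge> 1"
        then have Dm1: "-1 \<in> D" using D_def by simp
        have "on_pt s m (E (-1))" using hon[OF Dm1] by simp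
        moreover have "E (-1) \<noteq> m" using inj Dm1 D1 E1 by (metis inj_on_eq_iff one_neq_neg_one)
        ultimately show "s m \<noteq> 0" unfolding on_pt_def by auto
      qed
      define \<phi> :: "int \<Rightarrow> int" where "\<phi> = (\<lambda>i. if i < 0 then i else i + 1)"
      define D' where "D' = {- int n1 .. int (n2 - 1)}"
      have n2e: "int (n2 - 1) = int n2 - 1" using n2pos by simp
      have bphi: "bij_betw \<phi> D' (D - {0})"
        by (rule bij_betw_byWitness[where f'="\<lambda>k. if k < 0 then k else k - 1"])
           (use n2pos in \<open>auto simp: \<phi>_def D'_def D_def of_nat_diff\<close>)
      have phiD: "\<And>i. i \<in> D' \<Longrightarrow> \<phi> i \<in> D \<and> \<phi> i \<noteq> 0"
        using bphi by (auto simp: bij_betw_def)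
      have IH: "(\<Sum>j\<in>{- int n1 .. -1}. dg_weight s m ((E \<circ> \<phi>) j)) - int n1 + int (n3 s m) - 1
           = (\<Sum>j\<in>{1 .. int (n2 - 1)}. dg_weight s m ((E \<circ> \<phi>) j)) - int (n2 - 1) \<and> (n1 = 0 \<longrightarrow> n3 s m = m)"
      proof (rule Suc.IH[OF vm m1])
        show "bij_betw (E \<circ> \<phi>) {- int n1..int (n2 - 1)} {1..m}"
          using bij_betw_trans[OF bphi bijr] D'_def by simp
        show "\<forall>i\<in>{- int n1..int (n2 - 1)}. \<forall>j\<in>{- int n1..int (n2 - 1)}.
            dg_adj s m ((E \<circ> \<phi>) i) ((E \<circ> \<phi>) j) = (\<bar>i - j\<bar> = 1)"
        proof (intro ballI)
          fix i j assume ij: "i \<in> {- int n1..int (n2 - 1)}" "j \<in> {- int n1..int (n2 - 1)}"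
          then have "i \<in> D'" "j \<in> D'" using D'_def by auto
          then have "dg_adj s m (E (\<phi> i)) (E (\<phi> j)) \<longleftrightarrow> \<bar>\<phi> i - \<phi> j\<bar> = 1 \<or> (\<phi> i \<noteq> \<phi> j \<and> (\<phi> i = 1 \<or> \<phi> i = -1) \<and> (\<phi> j = 1 \<or> \<phi> j = -1))"
            using adjm phiD by blast
          moreover have "(\<bar>\<phi> i - \<phi> j\<bar> = 1 \<or> (\<phi> i \<noteq> \<phi> j \<and> (\<phi> i = 1 \<or> \<phi> i = -1) \<and> (\<phi> j = 1 \<or> \<phi> j = -1))) \<longleftrightarrow> \<bar>i - j\<bar> = 1"
            unfolding \<phi>_def by auto
          ultimately show "dg_adj s m ((E \<circ> \<phi>) i) ((E \<circ> \<phi>) j) = (\<bar>i - j\<bar> = 1)" by simp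
        qed
        show "(E \<circ> \<phi>) 0 = m" using E1 by (simp add: \<phi>_def)
        show "(E \<circ> \<phi>) (int (n2 - 1)) = 1" using Suc.prems(6) n2e by (simp add: \<phi>_def)
      qed
      have S1: "(\<Sum>j\<in>{- int n1 .. -1}. dg_weight s m ((E \<circ> \<phi>) j)) = W1 - (if n1 \<ge> 1 then 1 else 0)"
      proof -
        have "(\<Sum>j\<in>{- int n1 .. -1}. dg_weight s m ((E \<circ> \<phi>) j))
            = (\<Sum>j\<in>{- int n1 .. -1}. dg_weight s (Suc m) (E j) - (if j = -1 then 1 else 0))"
          by (rule sum.cong) (auto simp: \<phi>_def wstep D_def)
        also have "\<dots> = W1 - (\<Sum>j\<in>{- int n1 .. -1}. (if j = -1 then 1 else 0))"
          by (simp add: W1_def sum_subtractf)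
        also have "\<dots> = W1 - (if n1 \<ge> 1 then 1 else 0)"
          by simp
        finally show ?thesis .
      qed
      have S2: "(\<Sum>j\<in>{1 .. int (n2 - 1)}. dg_weight s m ((E \<circ> \<phi>) j)) = W2 - 2"
      proof -
        have "(\<Sum>j\<in>{1 .. int (n2 - 1)}. dg_weight s m ((E \<circ> \<phi>) j))
            = (\<Sum>j\<in>{1 .. int n2 - 1}. dg_weight s m (E (j + 1)))"
          using n2e by (auto simp: \<phi>_def intro: sum.cong)
        also have "\<dots> = (\<Sum>k\<in>{2 .. int n2}. dg_weight s m (E k))"
          using sum_shift_int[where f="\<lambda>k. dg_weight s m (E k)" and a=1 and b="int n2 - 1" and c=1] by simp
        also have "\<dots> = (\<Sum>k\<in>{2 .. int n2}. dg_weight s (Suc m) (E k))"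
          by (rule sum.cong) (auto simp: wstep D_def)
        also have "\<dots> = W2 - 2"
        proof -
          have "{1 .. int n2} = insert 1 {2 .. int n2}" using n2pos by auto
          then have "W2 = dg_weight s (Suc m) (E 1) + (\<Sum>k\<in>{2 .. int n2}. dg_weight s (Suc m) (E k))"
            unfolding W2_def by simp
          then show ?thesis using E1 wm by simp
        qed
        finally show ?thesis .
      qed
      show ?thesis
      proof (cases "n1 \<ge> 1")
        case True
        then have "n3 s (Suc m) = n3 s m" using n3_Suc_eq[OF v m1] smiff by simp
        then show ?thesis using IH S1 S2 True n2e unfolding W1_def W2_def by simp
      next
        case False
        then have "n1 = 0" by simp
        then have "n3 s m = m" "s m = 0" using IH smiff by auto
        then have "n3 s (Suc m) = Suc m" using n3_Suc_full by simp
        then show ?thesis using IH S1 S2 \<open>n1 = 0\<close> \<open>n3 s m = m\<close> n2e unfolding W1_def W2_def by simp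
      qed
    next
      assume B: "km = -1"
      then have Em1: "E (-1) = m" and Dm1: "-1 \<in> D" using km by auto
      then have n1pos: "n1 \<ge> 1" using D_def by simp
      have "on_pt s m (E 1)" using hon[OF D1] by simp
      moreover have "E 1 \<noteq> m" using inj Dm1 D1 Em1 by (metis inj_on_eq_iff one_neq_neg_one)
      ultimately have "s m \<noteq> 0" unfolding on_pt_def by auto
      then have n3e: "n3 s (Suc m) = n3 s m" using n3_Suc_eq[OF v m1] by simp
      define \<phi> :: "int \<Rightarrow> int" where "\<phi> = (\<lambda>i. if i \<le> 0 then i - 1 else i)"
      define D' where "D' = {- int (n1 - 1) .. int n2}"
      have n1e: "int (n1 - 1) = int n1 - 1" using n1pos by simp
      have bphi: "bij_betw \<phi> D' (D - {0})"
        by (rule bij_betw_byWitness[where f'="\<lambda>k. if k < 0 then k + 1 else k"])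
           (use n1pos in \<open>auto simp: \<phi>_def D'_def D_def of_nat_diff\<close>)
      have phiD: "\<And>i. i \<in> D' \<Longrightarrow> \<phi> i \<in> D \<and> \<phi> i \<noteq> 0"
        using bphi by (auto simp: bij_betw_def)
      have IH: "(\<Sum>j\<in>{- int (n1 - 1) .. -1}. dg_weight s m ((E \<circ> \<phi>) j)) - int (n1 - 1) + int (n3 s m) - 1
           = (\<Sum>j\<in>{1 .. int n2}. dg_weight s m ((E \<circ> \<phi>) j)) - int n2 \<and> (n1 - 1 = 0 \<longrightarrow> n3 s m = m)"
      proof (rule Suc.IH[OF vm m1])
        show "bij_betw (E \<circ> \<phi>) {- int (n1 - 1)..int n2} {1..m}"
          using bij_betw_trans[OF bphi bijr] D'_def by simp
        show "\<forall>i\<in>{- int (n1 - 1)..int n2}. \<forall>j\<in>{- int (n1 - 1)..int n2}.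
            dg_adj s m ((E \<circ> \<phi>) i) ((E \<circ> \<phi>) j) = (\<bar>i - j\<bar> = 1)"
        proof (intro ballI)
          fix i j assume ij: "i \<in> {- int (n1 - 1)..int n2}" "j \<in> {- int (n1 - 1)..int n2}"
          then have "i \<in> D'" "j \<in> D'" using D'_def by auto
          then have "dg_adj s m (E (\<phi> i)) (E (\<phi> j)) \<longleftrightarrow> \<bar>\<phi> i - \<phi> j\<bar> = 1 \<or> (\<phi> i \<noteq> \<phi> j \<and> (\<phi> i = 1 \<or> \<phi> i = -1) \<and> (\<phi> j = 1 \<or> \<phi> j = -1))"
            using adjm phiD by blast
          moreover have "(\<bar>\<phi> i - \<phi> j\<bar> = 1 \<or> (\<phi> i \<noteq> \<phi> j \<and> (\<phi> i = 1 \<or> \<phi> i = -1) \<and> (\<phi> j = 1 \<or> \<phi> j = -1))) \<longleftrightarrow> \<bar>i - j\<bar> = 1"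
            unfolding \<phi>_def by auto
          ultimately show "dg_adj s m ((E \<circ> \<phi>) i) ((E \<circ> \<phi>) j) = (\<bar>i - j\<bar> = 1)" by simp
        qed
        show "(E \<circ> \<phi>) 0 = m" using Em1 by (simp add: \<phi>_def)
        show "(E \<circ> \<phi>) (int n2) = 1" using Suc.prems(6) n2pos by (simp add: \<phi>_def)
      qed
      have S2: "(\<Sum>j\<in>{1 .. int n2}. dg_weight s m ((E \<circ> \<phi>) j)) = W2 - 1"
      proof -
        have "(\<Sum>j\<in>{1 .. int n2}. dg_weight s m ((E \<circ> \<phi>) j))
            = (\<Sum>j\<in>{1 .. int n2}. dg_weight s (Suc m) (E j) - (if j = 1 then 1 else 0))"
          by (rule sum.cong) (auto simp: \<phi>_def wstep D_def)
        also have "\<dots> = W2 - (\<Sum>j\<in>{1 .. int n2}. (if j = 1 then 1 else 0))"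
          by (simp add: W2_def sum_subtractf)
        also have "\<dots> = W2 - 1"
          using n2pos by simp
        finally show ?thesis .
      qed
      have S1: "(\<Sum>j\<in>{- int (n1 - 1) .. -1}. dg_weight s m ((E \<circ> \<phi>) j)) = W1 - 2"
      proof -
        have "(\<Sum>j\<in>{- int (n1 - 1) .. -1}. dg_weight s m ((E \<circ> \<phi>) j))
            = (\<Sum>j\<in>{- int n1 + 1 .. -1}. dg_weight s m (E (j + (-1))))"
          using n1e by (auto simp: \<phi>_def intro: sum.cong)
        also have "\<dots> = (\<Sum>k\<in>{- int n1 .. -2}. dg_weight s m (E k))"
          using sum_shift_int[where f="\<lambda>k. dg_weight s m (E k)" and a="- int n1 + 1" and b="-1" and c="-1"] by simp
        also have "\<dots> = (\<Sum>k\<in>{- int n1 .. -2}. dg_weight s (Suc m) (E k))"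
          by (rule sum.cong) (auto simp: wstep D_def)
        also have "\<dots> = W1 - 2"
        proof -
          have "{- int n1 .. -1} = insert (-1) {- int n1 .. -2}" using n1pos by auto
          then have "W1 = dg_weight s (Suc m) (E (-1)) + (\<Sum>k\<in>{- int n1 .. -2}. dg_weight s (Suc m) (E k))"
            unfolding W1_def by simp
          then show ?thesis using Em1 wm by simp
        qed
        finally show ?thesis .
      qed
      show ?thesis using IH S1 S2 n3e n1pos n1e unfolding W1_def W2_def by simp
    qed
  qed
qed


theorem lemma4p1:
  fixes n n1 n2 :: nat and s :: "nat \<Rightarrow> nat" and E :: "int \<Rightarrow> nat"
  assumes "n \<ge> 1"
    and "valid_blowups s n"
    and "dg_chain s n"
    and "bij_betw E {- int n1 .. int n2} {1..n}"
    and "\<forall>i\<in>{- int n1 .. int n2}. \<forall>j\<in>{- int n1 .. int n2}.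
           dg_adj s n (E i) (E j) \<longleftrightarrow> \<bar>i - j\<bar> = 1"
    and "E 0 = n"
    and "E (int n2) = 1"
  shows "(\<Sum>j\<in>{- int n1 .. -1}. dg_weight s n (E j)) - int n1 + int (n3 s n) - 1
           = (\<Sum>j\<in>{1 .. int n2}. dg_weight s n (E j)) - int n2
         \<and> n = n1 + n2 + 1
         \<and> int n \<le> int (n3 s n) + min (\<Sum>j\<in>{- int n1 .. -1}. dg_weight s n (E j))
                                      (\<Sum>j\<in>{1 .. int n2}. dg_weight s n (E j))"
proof -
  define D where "D = {- int n1 .. int n2}"
  have M: "(\<Sum>j\<in>{- int n1 .. -1}. dg_weight s n (E j)) - int n1 + int (n3 s n) - 1
           = (\<Sum>j\<in>{1 .. int n2}. dg_weight s n (E j)) - int n2"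
    using main[OF assms(2,1,4,5,6,7)] by simp
  have card: "n = n1 + n2 + 1"
    using bij_betw_same_card[OF assms(4)] by simp
  have inj: "inj_on E D" and img: "E ` D = {1..n}" using assms(4) by (auto simp: bij_betw_def D_def)
  have w2: "\<And>j. j \<in> D \<Longrightarrow> j \<noteq> 0 \<Longrightarrow> dg_weight s n (E j) \<ge> 2"
  proof -
    fix j assume j: "j \<in> D" "j \<noteq> 0"
    have "E j \<in> {1..n}" using img j by auto
    moreover have "0 \<in> D" by (simp add: D_def)
    then have "E j \<noteq> E 0" using inj j by (meson inj_on_eq_iff)
    ultimately have "1 \<le> E j" "E j < n" using assms(6) by auto
    then show "dg_weight s n (E j) \<ge> 2" using intm_diag_bound[of "E j" n s] by (simp add: dg_weight_def)
  qed
  have W1: "(\<Sum>j\<in>{- int n1 .. -1}. dg_weight s n (E j)) \<ge> 2 * int n1"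
  proof -
    have "(\<Sum>j\<in>{- int n1 .. -1}. dg_weight s n (E j)) \<ge> (\<Sum>j\<in>{- int n1 .. -1}. 2)"
      by (rule sum_mono) (auto intro: w2 simp: D_def)
    then show ?thesis by simp
  qed
  have W2: "(\<Sum>j\<in>{1 .. int n2}. dg_weight s n (E j)) \<ge> 2 * int n2"
  proof -
    have "(\<Sum>j\<in>{1 .. int n2}. dg_weight s n (E j)) \<ge> (\<Sum>j\<in>{1 .. int n2}. 2)"
      by (rule sum_mono) (auto intro: w2 simp: D_def)
    then show ?thesis by simp
  qed
  have "1 \<le> n3 s n" using n3_ge1 assms(1) by simp
  then show ?thesis using M card W1 W2 by auto
qed

end
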